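(* In the Cucker–Smale setting below, for all $n\in\mathbb{N}_0$, $$d_V(t_{2n+2})\le\frac{e^{\tilde K(t_{2n+2}-t_{2n+1})}}{2-e^{\tilde K(t_{2n+2}-t_{2n+1})}}\,d_V(t_{2n+1}).$$
   Context: Setting: $N\ge2$; $\tilde\psi:\mathbb{R}\to\mathbb{R}$ positive, bounded, continuous, with $\tilde K:=\|\tilde\psi\|_\infty$ and $\int_0^\infty\min_{r\in[0,x]}\tilde\psi(r)dx=+\infty$; $\{t_n\}_{n\in\mathbb{N}_0}$ increasing, nonnegative, $t_0=0$, $t_n\to\infty$, with $t_{2n+2}-t_{2n+1}<\frac{\ln2}{\tilde K}$ and $t_{2n+1}-t_{2n}>\frac1{\tilde K}$ for all $n$, and $\sum_{p\ge0}\ln\frac{e^{\tilde K(t_{2p+2}-t_{2p+1})}}{2-e^{\tilde K(t_{2p+2}-t_{2p+1})}}<\infty$. $\alpha(0)=1$, $\alpha=1$ on $(t_{2n},t_{2n+1})$, $\alpha=-1$ on $[t_{2n+1},t_{2n+2}]$. $\{(x_i,v_i)\}$ solves $x_i'=v_i$, $v_i'(t)=\frac1{N-1}\sum_{j\ne i}\alpha(t)\tilde\psi(|x_i(t)-x_j(t)|)(v_j(t)-v_i(t))$, $t>0$, with given initial data in $\mathbb{R}^d$ (continuous, $C^1$ on each $(t_n,t_{n+1})$). $d_V(t):=\max_{i,j}|v_i(t)-v_j(t)|$. *)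

theory Defs
  imports "HOL-Analysis.Analysis"
begin

definition dV :: "nat \<Rightarrow> (nat \<Rightarrow> real \<Rightarrow> 'a::real_normed_vector) \<Rightarrow> real \<Rightarrow> real" where
  "dV N v t = Max {norm (v i t - v j t) | i j. i < N \<and> j < N}"

end

theory Submission
  imports Defs
begin

lemma key:
  fixes v :: "nat \<Rightarrow> real \<Rightarrow> real ^ 'd" and F :: "nat \<Rightarrow> real \<Rightarrow> real ^ 'd"
  assumes ab: "a < b" and Kpos: "K > 0" and N1: "N \<ge> 1"
    and cont: "\<And>i. i < N \<Longrightarrow> continuous_on {a..b} (v i)"
    and der: "\<And>i t. i < N \<Longrightarrow> a < t \<Longrightarrow> t < b \<Longrightarrow> (v i has_vector_derivative F i t) (at t)"
    and bnd: "\<And>i t M. i < N \<Longrightarrow> a < t \<Longrightarrow> t < b \<Longrightarrow> (\<forall>j<N. norm (v j t - v i t) \<le> M) \<Longrightarrow> norm (F i t) \<le> K * M"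
    and D0: "\<And>i j. i < N \<Longrightarrow> j < N \<Longrightarrow> norm (v i a - v j a) \<le> D0"
    and eps: "\<epsilon> > 0"
  shows "\<And>i j t. i < N \<Longrightarrow> j < N \<Longrightarrow> t \<in> {a..b} \<Longrightarrow> norm (v i t - v j t) < (D0 + \<epsilon>) * exp (2*K*(t-a))"
proof (atomize (full), rule ccontr)
  define \<phi> where "\<phi> t = (D0 + \<epsilon>) * exp (2*K*(t-a))" for t
  have D0nn: "D0 \<ge> 0" using D0[of 0 0] N1 by auto
  have phipos: "\<phi> t > 0" for t unfolding \<phi>_def using D0nn eps by auto
  have phicont: "continuous_on S \<phi>" for S unfolding \<phi>_def by (intro continuous_intros)
  have phider: "(\<phi> has_real_derivative 2*K*\<phi> t) (at t)" for t
    unfolding \<phi>_def by (auto intro!: derivative_eq_intros)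
  define C where "C = {t \<in> {a..b}. \<exists>i<N. \<exists>j<N. \<phi> t \<le> norm (v i t - v j t)}"
  have C_eq: "C = (\<Union>p\<in>{..<N}\<times>{..<N}. {t \<in> {a..b}. \<phi> t \<le> norm (v (fst p) t - v (snd p) t)})"
    unfolding C_def by force
  have "closed C" unfolding C_eq
  proof (intro closed_UN ballI)
    fix p assume "p \<in> {..<N}\<times>{..<N}"
    then have "continuous_on {a..b} (v (fst p))" "continuous_on {a..b} (v (snd p))" using cont by auto
    then show "closed {t \<in> {a..b}. \<phi> t \<le> norm (v (fst p) t - v (snd p) t)}"
      by (intro continuous_on_closed_Collect_le phicont continuous_intros) auto
  qed auto
  assume "\<not> (\<forall>i j t. i < N \<longrightarrow> j < N \<longrightarrow> t \<in> {a..b} \<longrightarrow> norm (v i t - v j t) < (D0 + \<epsilon>) * exp (2*K*(t-a)))"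
  then obtain i0 j0 t0 where "i0 < N" "j0 < N" "t0 \<in> {a..b}" "\<phi> t0 \<le> norm (v i0 t0 - v j0 t0)"
    unfolding \<phi>_def by (auto simp: not_less)
  then have "t0 \<in> C" unfolding C_def by blast
  then have "C \<noteq> {}" by blast
  have bddC: "bdd_below C" unfolding C_def by (rule bdd_belowI[of _ a]) auto
  define s where "s = Inf C"
  have sC: "s \<in> C" unfolding s_def using closed_contains_Inf[OF \<open>C \<noteq> {}\<close> bddC \<open>closed C\<close>] .
  then obtain i j where ij: "i < N" "j < N" "\<phi> s \<le> norm (v i s - v j s)" and sab: "a \<le> s" "s \<le> b"
    unfolding C_def by auto
  have notC: "r \<notin> C" if "r < s" for r using cInf_lower[OF _ bddC, of r] that unfolding s_def by auto
  have "s \<noteq> a"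
  proof
    assume "s = a"
    then have "\<phi> a \<le> norm (v i a - v j a)" using ij by simp
    moreover have "\<phi> a = D0 + \<epsilon>" unfolding \<phi>_def by simp
    ultimately show False using D0[OF ij(1,2)] eps by simp
  qed
  with sab have as: "a < s" by simp
  have below: "norm (v k r - v l r) < \<phi> r" if "k < N" "l < N" "a \<le> r" "r < s" for k l r
    using notC[of r] that sab unfolding C_def by (auto simp: not_le)
  define c where "c = v i s - v j s"
  define h where "h t = (v i t - v j t) \<bullet> c - norm c * \<phi> t" for t
  define h' where "h' t = (\<lambda>x::real. x * ((F i t - F j t) \<bullet> c - norm c * (2*K*\<phi> t)))" for t
  have hcont: "continuous_on {a..s} h"
  proof -
    have "continuous_on {a..s} (v i)" "continuous_on {a..s} (v j)"
      using cont[OF ij(1)] cont[OF ij(2)] sab by (auto elim!: continuous_on_subset)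
    then show ?thesis unfolding h_def by (intro continuous_intros phicont)
  qed
  have hder: "(h has_derivative h' t) (at t)" if "a < t" "t < s" for t
  proof -
    have "(v i has_vector_derivative F i t) (at t)" "(v j has_vector_derivative F j t) (at t)"
      using der ij that sab by auto
    then have "((\<lambda>t. v i t - v j t) has_vector_derivative (F i t - F j t)) (at t)"
      by (rule has_vector_derivative_diff)
    then have d1: "((\<lambda>t. v i t - v j t) has_derivative (\<lambda>x. x *\<^sub>R (F i t - F j t))) (at t)"
      by (simp add: has_vector_derivative_def)
    have d2: "((\<lambda>t. (v i t - v j t) \<bullet> c) has_derivative (\<lambda>x. (x *\<^sub>R (F i t - F j t)) \<bullet> c)) (at t)"
      by (rule has_derivative_inner_left[OF d1])
    have d3: "((\<lambda>t. norm c * \<phi> t) has_derivative (\<lambda>x. x * (norm c * (2*K*\<phi> t)))) (at t)"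
      using has_derivative_mult_right[OF phider[of t, unfolded has_field_derivative_def], of "norm c"]
      by (simp add: ac_simps)
    have "(h has_derivative (\<lambda>x. (x *\<^sub>R (F i t - F j t)) \<bullet> c - x * (norm c * (2*K*\<phi> t)))) (at t)"
      unfolding h_def by (rule has_derivative_diff[OF d2 d3])
    then show ?thesis unfolding h'_def by (simp add: algebra_simps)
  qed
  obtain \<xi> where xi: "a < \<xi>" "\<xi> < s" "h s - h a = h' \<xi> (s - a)"
    using mvt[OF as hcont hder] by blast
  have Fb: "norm (F k \<xi>) \<le> K * \<phi> \<xi>" if "k < N" for k
    using bnd[OF that xi(1)] xi sab below[of _ k \<xi>] that by (auto intro: less_imp_le)
  have "(F i \<xi> - F j \<xi>) \<bullet> c \<le> norm (F i \<xi> - F j \<xi>) * norm c"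
    by (rule norm_cauchy_schwarz[THEN order_trans]) simp
  also have "\<dots> \<le> (norm (F i \<xi>) + norm (F j \<xi>)) * norm c"
    by (intro mult_right_mono norm_triangle_ineq4) simp
  also have "\<dots> \<le> (2*K*\<phi> \<xi>) * norm c"
    using Fb[OF ij(1)] Fb[OF ij(2)] by (intro mult_right_mono) auto
  finally have "h' \<xi> (s - a) \<le> 0" unfolding h'_def using as
    by (intro mult_nonneg_nonpos) (auto simp: algebra_simps)
  then have hle: "h s \<le> h a" using xi by simp
  have nc: "norm c \<ge> \<phi> s" using ij unfolding c_def by simp
  have "h s = norm c * (norm c - \<phi> s)" unfolding h_def c_def
    by (simp add: algebra_simps dot_square_norm power2_eq_square)
  also have "\<dots> \<ge> 0" using nc phipos[of s] by simp
  finally have hs: "h s \<ge> 0" .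
  have "(v i a - v j a) \<bullet> c \<le> norm (v i a - v j a) * norm c" by (rule norm_cauchy_schwarz[THEN order_trans]) simp
  also have "\<dots> \<le> D0 * norm c" using D0[OF ij(1,2)] by (intro mult_right_mono) auto
  finally have "h a \<le> D0 * norm c - norm c * (D0 + \<epsilon>)" unfolding h_def \<phi>_def by simp
  also have "\<dots> = - \<epsilon> * norm c" by (simp add: algebra_simps)
  also have "\<dots> < 0" proof -
    have "norm c > 0" using nc phipos[of s] by linarith
    then show "- \<epsilon> * norm c < 0" using eps by simp
  qed
  finally show False using hs hle by simp
qed

theorem lemma7p10:
  fixes N :: nat
    and psi :: "real \<Rightarrow> real"
    and K :: real
    and ts :: "nat \<Rightarrow> real"
    and alpha :: "real \<Rightarrow> real"
    and x v :: "nat \<Rightarrow> real \<Rightarrow> real ^ 'd"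
  assumes N2: "N \<ge> 2"
    and psi_pos: "\<And>r. psi r > 0"
    and psi_bdd: "bdd_above (range psi)"
    and psi_cont: "continuous_on UNIV psi"
    and K_def: "K = (SUP r. psi r)"
    and psi_int: "filterlim (\<lambda>X. integral {0..X} (\<lambda>s. Inf (psi ` {0..s}))) at_top at_top"
    and ts_mono: "strict_mono ts"
    and ts0: "ts 0 = 0"
    and ts_lim: "filterlim ts at_top sequentially"
    and ts_short: "\<And>n. ts (2*n+2) - ts (2*n+1) < ln 2 / K"
    and ts_long: "\<And>n. ts (2*n+1) - ts (2*n) > 1 / K"
    and ts_sum: "summable (\<lambda>p. ln (exp (K * (ts (2*p+2) - ts (2*p+1)))
                                   / (2 - exp (K * (ts (2*p+2) - ts (2*p+1))))))"
    and alpha0: "alpha 0 = 1"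
    and alpha_pos: "\<And>n t. ts (2*n) < t \<Longrightarrow> t < ts (2*n+1) \<Longrightarrow> alpha t = 1"
    and alpha_neg: "\<And>n t. ts (2*n+1) \<le> t \<Longrightarrow> t \<le> ts (2*n+2) \<Longrightarrow> alpha t = -1"
    and x_cont: "\<And>i. i < N \<Longrightarrow> continuous_on {0..} (x i)"
    and v_cont: "\<And>i. i < N \<Longrightarrow> continuous_on {0..} (v i)"
    and x_ode: "\<And>i n t. i < N \<Longrightarrow> ts n < t \<Longrightarrow> t < ts (Suc n) \<Longrightarrow>
                  (x i has_vector_derivative v i t) (at t)"
    and v_ode: "\<And>i n t. i < N \<Longrightarrow> ts n < t \<Longrightarrow> t < ts (Suc n) \<Longrightarrow>
                  (v i has_vector_derivative
                     ((1 / (real N - 1)) *\<^sub>R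
                       (\<Sum>j\<in>{j. j < N \<and> j \<noteq> i}.
                          (alpha t * psi (norm (x i t - x j t))) *\<^sub>R (v j t - v i t)))) (at t)"
  shows "\<forall>n. dV N v (ts (2*n+2))
            \<le> exp (K * (ts (2*n+2) - ts (2*n+1))) / (2 - exp (K * (ts (2*n+2) - ts (2*n+1))))
               * dV N v (ts (2*n+1))"
proof
  fix n
  define a where "a = ts (2*n+1)"
  define b where "b = ts (2*n+2)"
  define y where "y = exp (K * (b - a))"
  have ab: "a < b" unfolding a_def b_def using ts_mono by (simp add: strict_mono_def)
  have a0: "0 < a" unfolding a_def using ts_mono ts0 by (metis strict_mono_def zero_less_Suc Suc_eq_plus1)
  have psiK: "psi r \<le> K" for r unfolding K_def using psi_bdd by (simp add: cSUP_upper)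
  have Kpos: "K > 0" using psiK[of 0] psi_pos[of 0] by linarith
  have N1: "N \<ge> 1" using N2 by simp
  have fin: "finite {norm (v i t - v j t) | i j. i < N \<and> j < N}" for t
  proof -
    have "{norm (v i t - v j t) | i j. i < N \<and> j < N} = (\<lambda>p. norm (v (fst p) t - v (snd p) t)) ` ({..<N}\<times>{..<N})"
      by (auto simp: image_def)
    then show ?thesis by simp
  qed
  have ne: "{norm (v i t - v j t) | i j. i < N \<and> j < N} \<noteq> {}" for t
  proof -
    have "norm (v 0 t - v 0 t) \<in> {norm (v i t - v j t) | i j. i < N \<and> j < N}"
      using N1 by (intro CollectI exI[of _ 0]) simp
    then show ?thesis by blast
  qed
  define F where "F i t = (1 / (real N - 1)) *\<^sub>R
                       (\<Sum>j\<in>{j. j < N \<and> j \<noteq> i}.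
                          (alpha t * psi (norm (x i t - x j t))) *\<^sub>R (v j t - v i t))" for i t
  have cont: "continuous_on {a..b} (v i)" if "i < N" for i
    using v_cont[OF that] a0 by (auto elim!: continuous_on_subset)
  have der: "(v i has_vector_derivative F i t) (at t)" if "i < N" "a < t" "t < b" for i t
    using v_ode[OF that(1), of "2*n+1" t] that unfolding a_def b_def F_def by simp
  have bnd: "norm (F i t) \<le> K * M" if "i < N" "a < t" "t < b" "\<forall>j<N. norm (v j t - v i t) \<le> M" for i t M
  proof -
    have al: "alpha t = -1" using alpha_neg[of n t] that unfolding a_def b_def by simp
    have "norm (v i t - v i t) \<le> M" using that(1,4) by blast
    then have M0: "0 \<le> M" by simp
    have cardJ: "card {j. j < N \<and> j \<noteq> i} = N - 1"
    proof -
      have "{j. j < N \<and> j \<noteq> i} = {..<N} - {i}" by auto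
      then show ?thesis using that(1) by simp
    qed
    have "norm (\<Sum>j\<in>{j. j < N \<and> j \<noteq> i}. (alpha t * psi (norm (x i t - x j t))) *\<^sub>R (v j t - v i t))
        \<le> (\<Sum>j\<in>{j. j < N \<and> j \<noteq> i}. norm ((alpha t * psi (norm (x i t - x j t))) *\<^sub>R (v j t - v i t)))"
      by (rule norm_sum)
    also have "\<dots> \<le> (\<Sum>j\<in>{j. j < N \<and> j \<noteq> i}. K * M)"
    proof (rule sum_mono)
      fix j assume j: "j \<in> {j. j < N \<and> j \<noteq> i}"
      have "norm ((alpha t * psi (norm (x i t - x j t))) *\<^sub>R (v j t - v i t))
          = psi (norm (x i t - x j t)) * norm (v j t - v i t)"
        using al psi_pos[of "norm (x i t - x j t)"] by simp
      also have "\<dots> \<le> K * M"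
        using j that(4) psiK psi_pos Kpos by (intro mult_mono) (auto intro: less_imp_le)
      finally show "norm ((alpha t * psi (norm (x i t - x j t))) *\<^sub>R (v j t - v i t)) \<le> K * M" .
    qed
    also have "\<dots> = real (N - 1) * (K * M)" using cardJ by simp
    finally have S: "norm (\<Sum>j\<in>{j. j < N \<and> j \<noteq> i}. (alpha t * psi (norm (x i t - x j t))) *\<^sub>R (v j t - v i t))
        \<le> real (N - 1) * (K * M)" .
    have N1r: "real N - 1 > 0" using N2 by simp
    have "norm (F i t) = (1 / (real N - 1)) * norm (\<Sum>j\<in>{j. j < N \<and> j \<noteq> i}. (alpha t * psi (norm (x i t - x j t))) *\<^sub>R (v j t - v i t))"
      unfolding F_def using N1r by simp
    also have "\<dots> \<le> (1 / (real N - 1)) * (real (N - 1) * (K * M))"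
      using S N1r by (intro mult_left_mono) auto
    also have "\<dots> = K * M" using N1r N1 by (simp add: of_nat_diff)
    finally show ?thesis .
  qed
  define D0 where "D0 = dV N v a"
  have D0: "norm (v i a - v j a) \<le> D0" if "i < N" "j < N" for i j
    unfolding D0_def dV_def using that by (intro Max_ge[OF fin]) blast
  have D0nn: "D0 \<ge> 0" using D0[of 0 0] N1 by simp
  have ypos: "y > 0" unfolding y_def by simp
  have y2: "y < 2"
  proof -
    have "K * (b - a) < ln 2" using ts_short[of n] Kpos unfolding a_def b_def
      by (simp add: field_simps mult.commute)
    then have "y < exp (ln 2)" unfolding y_def by (simp only: exp_less_cancel_iff)
    then show ?thesis by simp
  qed
  have yy: "y^2 \<le> y / (2 - y)"
  proof -
    have "y - y^2*(2-y) = y*(y-1)^2" by (simp add: algebra_simps power2_eq_square)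
    moreover have "y*(y-1)^2 \<ge> 0" using ypos by simp
    ultimately have "y^2 * (2 - y) \<le> y" by linarith
    then show ?thesis using y2 by (simp add: field_simps)
  qed
  have e2: "exp (2*K*(b-a)) = y^2" unfolding y_def
    by (simp add: power2_eq_square flip: exp_add)
  have kk: "norm (v i t - v j t) < (D0 + \<epsilon>) * exp (2*K*(t-a))"
    if "i < N" "j < N" "t \<in> {a..b}" "\<epsilon> > 0" for i j t \<epsilon>
    using key[where v=v and F=F and N=N and a=a and b=b and K=K and ?D0.0=D0 and \<epsilon>=\<epsilon>]
      ab Kpos N1 cont der bnd D0 that by blast
  have main: "dV N v b \<le> D0 * y^2 + e" if e: "e > 0" for e
  proof -
    define \<epsilon> where "\<epsilon> = e / y^2"
    have eps: "\<epsilon> > 0" unfolding \<epsilon>_def using e ypos by simp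
    have "dV N v b < (D0 + \<epsilon>) * exp (2*K*(b-a))"
      unfolding dV_def
    proof (subst Max_less_iff[OF fin ne], safe)
      fix i j assume "i < N" "j < N"
      then show "norm (v i b - v j b) < (D0 + \<epsilon>) * exp (2*K*(b-a))"
        using kk[of i j b \<epsilon>] eps ab by simp
    qed
    also have "\<dots> = D0 * y^2 + e" unfolding e2 \<epsilon>_def using ypos by (simp add: field_simps)
    finally show ?thesis by simp
  qed
  have "dV N v b \<le> D0 * y^2" using main by (rule field_le_epsilon)
  also have "\<dots> \<le> y / (2 - y) * D0" using mult_right_mono[OF yy D0nn] by (simp add: mult.commute)
  finally show "dV N v (ts (2*n+2))
            \<le> exp (K * (ts (2*n+2) - ts (2*n+1))) / (2 - exp (K * (ts (2*n+2) - ts (2*n+1))))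
               * dV N v (ts (2*n+1))" unfolding a_def b_def y_def D0_def by simp
qed

end
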